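(* Consider an autoregressive language model over a finite vocabulary $V$ with unembedding $U$, $u_t=U^\top e_t$, and a query $q$ with correct answer $a=a_1\cdots a_N$. For $k=1,\dots,N$ let $p_k=qa_1\cdots a_{k-1}$, let $r_k$ be the unsteered final representation at prefix $p_k$, $P^k_\theta=\mathrm{softmax}(Ur_k)$, and $P_0^k=P^k_\theta(a_k)<1$, so the unsteered probability of $a$ is $P_0=\prod_kP_0^k$. For steering coefficient $r_e\neq0$ the steered step distribution is $\mathrm{softmax}(U(r_k+d_k))$ with $d_k=\lambda|r_e|v_k$, $\lambda>0$, and the steered probability of $a$ is $P_{\theta,r_e}(a\mid q)=\prod_k\mathrm{softmax}(U(r_k+d_k))_{a_k}$. Suppose that for each $k$ there is $S_k\subseteq V$ with $a_k\in S_k$, $|S_k|=T\ge3$, $\epsilon_k\in[0,1)$ defined by $\sum_{i\in S_k\setminus\{a_k\}}P^k_\theta(i)=(1-\epsilon_k)(1-P_0^k)>0$, and that $v_k$ is a random unit vector such that $X^k_i=\langle v_k,u_i\rangle$, $i\in S_k$, are i.i.d. continuous with variance $\sigma_k^2>0$. Define $I^k_\pm=\{i\in S_k\setminus\{a_k\}:\pm(X^k_i-X^k_{a_k})>0\}$, $P^k_\pm=\sum_{i\in I^k_\pm}P^k_\theta(i)$, $c^k_\pm=\frac{1}{P^k_\pm}\sum_{i\in I^k_\pm}P^k_\theta(i)(X^k_i-X^k_{a_k})$, $\alpha_k=\frac{\min\{P^k_+,P^k_-\}}{(1-P^k_0)(1-\epsilon_k)}$, $\beta_k=\min\{|c^k_-|,c^k_+\}/\sigma_k$.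 Then with probability at least $1-\frac{2N}{T}$, all $\alpha_k,\beta_k>0$ and $$P_{\theta,r_e}(a\mid q)\le\frac{P_0}{\prod_{k=1}^N\Big(P_0^k+(1-P_0^k)\,\alpha_k(1-\epsilon_k)\big(1+\tfrac{\lambda^2\sigma_k^2\beta_k^2}{2}r_e^2\big)\Big)}.$$
   Context: Helpfulness is the probability the model assigns to the correct answer; for a multi-token answer this is the product of the per-step conditional probabilities of its tokens. Steering with coefficient $r_e$ changes the final hidden representation at step $k$ by $d_k$, whose direction is modeled as random with respect to the unembeddings of the tokens in $S_k$ (typically the top-$T$ tokens at that step). *)

theory Defs
  imports "HOL-Probability.Probability"
begin

definition softmax :: "('v::finite \<Rightarrow> 'e::real_inner) \<Rightarrow> 'e \<Rightarrow> 'v \<Rightarrow> real" where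
  "softmax u r t = exp (u t \<bullet> r) / (\<Sum>s\<in>UNIV. exp (u s \<bullet> r))"

text \<open>Given a realized direction w, the sets I+ and I- (X_i = w . u_i).\<close>
definition Iplus :: "('v \<Rightarrow> 'e::real_inner) \<Rightarrow> 'v set \<Rightarrow> 'v \<Rightarrow> 'e \<Rightarrow> 'v set" where
  "Iplus u S a w = {i \<in> S - {a}. w \<bullet> u i - w \<bullet> u a > 0}"

definition Iminus :: "('v \<Rightarrow> 'e::real_inner) \<Rightarrow> 'v set \<Rightarrow> 'v \<Rightarrow> 'e \<Rightarrow> 'v set" where
  "Iminus u S a w = {i \<in> S - {a}. -(w \<bullet> u i - w \<bullet> u a) > 0}"

definition massI :: "('v \<Rightarrow> real) \<Rightarrow> 'v set \<Rightarrow> real" where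
  "massI P I = (\<Sum>i\<in>I. P i)"

definition cI :: "('v \<Rightarrow> real) \<Rightarrow> ('v \<Rightarrow> 'e::real_inner) \<Rightarrow> 'v \<Rightarrow> 'e \<Rightarrow> 'v set \<Rightarrow> real" where
  "cI P u a w I = (1 / massI P I) * (\<Sum>i\<in>I. P i * (w \<bullet> u i - w \<bullet> u a))"

definition alphaK :: "('v::finite \<Rightarrow> 'e::real_inner) \<Rightarrow> 'e \<Rightarrow> 'v set \<Rightarrow> 'v \<Rightarrow> real \<Rightarrow> 'e \<Rightarrow> real" where
  "alphaK u r S a eps w =
     min (massI (softmax u r) (Iplus u S a w)) (massI (softmax u r) (Iminus u S a w))
     / ((1 - softmax u r a) * (1 - eps))"

definition betaK :: "('v::finite \<Rightarrow> 'e::real_inner) \<Rightarrow> 'e \<Rightarrow> 'v set \<Rightarrow> 'v \<Rightarrow> real \<Rightarrow> 'e \<Rightarrow> real" where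
  "betaK u r S a sg w =
     min \<bar>cI (softmax u r) u a w (Iminus u S a w)\<bar> (cI (softmax u r) u a w (Iplus u S a w)) / sg"

end

theory Submission
  imports Defs
begin


lemma (in prob_space) tie0:
  fixes Z :: "'i \<Rightarrow> 'a \<Rightarrow> real"
  assumes ind: "indep_vars (\<lambda>_. borel) Z S" and i: "i \<in> S" and a: "a \<in> S" and ne: "i \<noteq> a"
    and atom: "\<And>x. measure M {\<omega>\<in>space M. Z a \<omega> = x} = 0"
  shows "measure M {\<omega>\<in>space M. Z i \<omega> = Z a \<omega>} = 0"
proof -
  have iv: "indep_var (PiM {i} (\<lambda>_. borel)) (\<lambda>\<omega>. restrict (\<lambda>j. Z j \<omega>) {i})
      (PiM {a} (\<lambda>_. borel)) (\<lambda>\<omega>. restrict (\<lambda>j. Z j \<omega>) {a})"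
    by (rule indep_var_restrict[OF ind]) (use i a ne in auto)
  have iv2: "indep_var borel ((\<lambda>f. f i) \<circ> (\<lambda>\<omega>. restrict (\<lambda>j. Z j \<omega>) {i}))
      borel ((\<lambda>f. f a) \<circ> (\<lambda>\<omega>. restrict (\<lambda>j. Z j \<omega>) {a}))"
    by (rule indep_var_compose[OF iv]) auto
  have eqf: "((\<lambda>f. f i) \<circ> (\<lambda>\<omega>. restrict (\<lambda>j. Z j \<omega>) {i})) = Z i"
       "((\<lambda>f. f a) \<circ> (\<lambda>\<omega>. restrict (\<lambda>j. Z j \<omega>) {a})) = Z a" by auto
  have iv3: "indep_var borel (Z i) borel (Z a)" using iv2 unfolding eqf .
  then have rv: "random_variable borel (Z i)" "random_variable borel (Z a)"
    and D: "distr M borel (Z i) \<Otimes>\<^sub>M distr M borel (Z a) = distr M (borel \<Otimes>\<^sub>M borel) (\<lambda>x. (Z i x, Z a x))"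
    unfolding indep_var_distribution_eq by auto
  interpret A: prob_space "distr M borel (Z a)" by (rule prob_space_distr) fact
  define Dg where "Dg = {p :: real \<times> real. fst p = snd p}"
  have Dgs: "Dg \<in> sets (borel \<Otimes>\<^sub>M borel)"
  proof -
    have "Dg = {p \<in> space (borel \<Otimes>\<^sub>M borel). fst p = snd p}" by (auto simp: Dg_def space_pair_measure)
    also have "\<dots> \<in> sets (borel \<Otimes>\<^sub>M borel)" by measurable
    finally show ?thesis .
  qed
  have "emeasure (distr M borel (Z i) \<Otimes>\<^sub>M distr M borel (Z a)) Dg
      = (\<integral>\<^sup>+x. emeasure (distr M borel (Z a)) (Pair x -` Dg) \<partial>distr M borel (Z i))"
    by (rule A.emeasure_pair_measure_alt) (simp add: Dgs)
  also have "\<dots> = (\<integral>\<^sup>+x. 0 \<partial>distr M borel (Z i))"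
  proof (rule nn_integral_cong)
    fix x
    have "Pair x -` Dg = {x}" by (auto simp: Dg_def)
    then have "emeasure (distr M borel (Z a)) (Pair x -` Dg) = emeasure M (Z a -` {x} \<inter> space M)"
      using rv by (simp add: emeasure_distr)
    also have "Z a -` {x} \<inter> space M = {\<omega>\<in>space M. Z a \<omega> = x}" by auto
    also have "emeasure M \<dots> = 0" using atom[of x] by (simp add: emeasure_eq_measure)
    finally show "emeasure (distr M borel (Z a)) (Pair x -` Dg) = 0" .
  qed
  finally have "emeasure (distr M (borel \<Otimes>\<^sub>M borel) (\<lambda>x. (Z i x, Z a x))) Dg = 0" using D by simp
  moreover have "random_variable (borel \<Otimes>\<^sub>M borel) (\<lambda>x. (Z i x, Z a x))"
    using rv by (rule measurable_Pair)
  ultimately have "emeasure M ((\<lambda>x. (Z i x, Z a x)) -` Dg \<inter> space M) = 0"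
    using Dgs by (simp add: emeasure_distr)
  moreover have "(\<lambda>x. (Z i x, Z a x)) -` Dg \<inter> space M = {\<omega>\<in>space M. Z i \<omega> = Z a \<omega>}"
    by (auto simp: Dg_def)
  ultimately show ?thesis by (simp add: emeasure_eq_measure)
qed



lemma (in prob_space) max_prob:
  fixes Z :: "'i \<Rightarrow> 'a \<Rightarrow> real"
  assumes fin: "finite S" and a: "a \<in> S" and ind: "indep_vars (\<lambda>_. borel) Z S"
    and dist: "\<And>i. i \<in> S \<Longrightarrow> distr M borel (Z i) = distr M borel (Z a)"
    and atom: "\<And>x. measure M {\<omega>\<in>space M. Z a \<omega> = x} = 0"
  shows "measure M {\<omega>\<in>space M. \<forall>i\<in>S-{a}. Z i \<omega> \<le> Z a \<omega>} \<le> 1 / card S"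
proof -
  have rv: "\<And>i. i \<in> S \<Longrightarrow> random_variable borel (Z i)"
    using ind by (simp add: indep_vars_def)
  define \<mu> where "\<mu> = distr M borel (Z a)"
  have pmu: "prob_space \<mu>" unfolding \<mu>_def using rv[OF a] by (rule prob_space_distr)
  define \<nu> where "\<nu> = PiM S (\<lambda>_. \<mu>)"
  define Y where "Y = (\<lambda>\<omega>. \<lambda>i\<in>S. Z i \<omega>)"
  have "distr M (PiM S (\<lambda>_. borel)) Y = PiM S (\<lambda>i. distr M borel (Z i))"
    using ind indep_vars_iff_distr_eq_PiM'[where I=S and M'="\<lambda>_. borel" and X=Z] a rv unfolding Y_def by auto
  also have "\<dots> = \<nu>" unfolding \<nu>_def \<mu>_def by (rule PiM_cong) (auto simp: dist)
  finally have Yd: "distr M (PiM S (\<lambda>_. borel)) Y = \<nu>" .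
  have Ym: "Y \<in> measurable M (PiM S (\<lambda>_. borel))" unfolding Y_def
    by (intro measurable_restrict rv)
  have sets\<nu>: "sets \<nu> = sets (PiM S (\<lambda>_. borel))" "space \<nu> = space (PiM S (\<lambda>_. (borel::real measure)))"
    unfolding \<nu>_def \<mu>_def by (auto intro!: sets_PiM_cong simp: space_PiM)
  define E where "E j = {x\<in>space (PiM S (\<lambda>_. (borel::real measure))). \<forall>i\<in>S-{j}. x i < x j}" for j
  have Es: "E j \<in> sets (PiM S (\<lambda>_. borel))" if "j \<in> S" for j
  proof -
    have "Measurable.pred (PiM S (\<lambda>_. borel)) (\<lambda>x. \<forall>i\<in>S-{j}. x i < (x j::real))"
    proof (rule pred_intros_finite)
      show "finite (S - {j})" using fin by simp
      fix i assume "i \<in> S - {j}"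
      then have i: "i \<in> S" by auto
      show "Measurable.pred (PiM S (\<lambda>_. borel)) (\<lambda>x. x i < (x j::real))"
        using i that by measurable
    qed
    then show ?thesis unfolding E_def by (rule predE)
  qed
  define EM where "EM j = {\<omega>\<in>space M. \<forall>i\<in>S-{j}. Z i \<omega> < Z j \<omega>}" for j
  have EMeq: "Y -` E j \<inter> space M = EM j" if "j \<in> S" for j
    using that by (auto simp: E_def EM_def Y_def space_PiM)
  have mEM: "measure M (EM j) = measure \<nu> (E j)" if "j \<in> S" for j
    using measure_distr[OF Ym Es[OF that]] Yd EMeq[OF that] by simp
  have sym: "measure \<nu> (E j) = measure \<nu> (E a)" if j: "j \<in> S" for j
  proof -
    define f where "f n = (if n = a then j else if n = j then a else n)" for n
    have finj: "inj_on f S" unfolding f_def inj_on_def by auto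
    have fS: "f \<in> S \<rightarrow> S" unfolding f_def using a j by auto
    define t where "t = (\<lambda>\<omega>. \<lambda>n\<in>S. \<omega> (f n) :: real)"
    have dd: "distr \<nu> \<nu> t = \<nu>"
      using distr_PiM_reindex[of S "\<lambda>_. \<mu>" f S] pmu finj fS unfolding \<nu>_def t_def by simp
    have tm: "t \<in> measurable \<nu> \<nu>"
      unfolding t_def \<nu>_def using fS by (intro measurable_restrict measurable_component_singleton) auto
    have Ejs: "E j \<in> sets \<nu>" using Es[OF j] sets\<nu> by simp
    have pre: "t -` E j \<inter> space \<nu> = E a"
    proof (intro equalityI subsetI)
      fix x assume x: "x \<in> t -` E j \<inter> space \<nu>"
      then have xs: "x \<in> space (PiM S (\<lambda>_. (borel::real measure)))" using sets\<nu> by simp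
      from x have H: "\<forall>i\<in>S-{j}. t x i < t x j" by (simp add: E_def)
      have "\<forall>i\<in>S-{a}. x i < x a"
      proof
        fix i assume i: "i \<in> S - {a}"
        have fi: "f i \<in> S - {j}" "f (f i) = i" using i j a unfolding f_def by auto
        have "t x (f i) < t x j" using H fi by auto
        then show "x i < x a" using fi j fS unfolding t_def by (auto simp: f_def split: if_splits)
      qed
      then show "x \<in> E a" using xs by (simp add: E_def)
    next
      fix x assume x: "x \<in> E a"
      then have xs: "x \<in> space \<nu>" using sets\<nu> by (simp add: E_def)
      from x have H: "\<forall>i\<in>S-{a}. x i < x a" by (simp add: E_def)
      have tx: "t x \<in> space (PiM S (\<lambda>_. (borel::real measure)))" unfolding t_def by (simp add: space_PiM)
      have "\<forall>i\<in>S-{j}. t x i < t x j"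
      proof
        fix i assume i: "i \<in> S - {j}"
        have fi: "f i \<in> S - {a}" using i j a unfolding f_def by auto
        have "x (f i) < x a" using H fi by auto
        then show "t x i < t x j" using i j unfolding t_def by (auto simp: f_def)
      qed
      then show "x \<in> t -` E j \<inter> space \<nu>" using tx xs by (simp add: E_def)
    qed
    have "measure \<nu> (E j) = measure (distr \<nu> \<nu> t) (E j)" using dd by simp
    also have "\<dots> = measure \<nu> (t -` E j \<inter> space \<nu>)" by (rule measure_distr[OF tm Ejs])
    finally show ?thesis using pre by simp
  qed
  have EMeqa: "measure M (EM j) = measure M (EM a)" if "j \<in> S" for j
    using sym[OF that] mEM[OF that] mEM[OF a] by simp
  have EMs: "EM j \<in> events" if "j \<in> S" for j
    using EMeq[OF that] Ym Es[OF that] by (metis measurable_sets)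
  have disj: "disjoint_family_on EM S"
  proof -
    have "EM m \<inter> EM n = {}" if "m \<in> S" "n \<in> S" "m \<noteq> n" for m n
    proof -
      have "\<omega> \<notin> EM m \<inter> EM n" for \<omega>
      proof
        assume "\<omega> \<in> EM m \<inter> EM n"
        then have "Z n \<omega> < Z m \<omega>" "Z m \<omega> < Z n \<omega>" using that unfolding EM_def by auto
        then show False by simp
      qed
      then show ?thesis by blast
    qed
    then show ?thesis unfolding disjoint_family_on_def by blast
  qed
  have "(\<Sum>j\<in>S. measure M (EM j)) = measure M (\<Union>j\<in>S. EM j)"
    using fin disj EMs by (intro finite_measure_finite_Union[symmetric]) auto
  also have "\<dots> \<le> 1" by (rule prob_le_1)
  finally have "real (card S) * measure M (EM a) \<le> 1" using EMeqa by simp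
  then have Ea: "measure M (EM a) \<le> 1 / card S"
  proof -
    have "card S > 0" using a fin card_gt_0_iff by blast
    then show ?thesis using \<open>real (card S) * measure M (EM a) \<le> 1\<close> by (simp add: field_simps)
  qed
  define TM where "TM i = {\<omega>\<in>space M. Z i \<omega> = Z a \<omega>}" for i
  have TMs: "TM i \<in> events" if "i \<in> S" for i
    unfolding TM_def using rv[OF that] rv[OF a] by measurable
  have TM0: "measure M (TM i) = 0" if "i \<in> S - {a}" for i
    unfolding TM_def using tie0[OF ind _ a _ atom] that by auto
  have sub: "{\<omega>\<in>space M. \<forall>i\<in>S-{a}. Z i \<omega> \<le> Z a \<omega>} \<subseteq> EM a \<union> (\<Union>i\<in>S-{a}. TM i)"
    unfolding EM_def TM_def by (auto simp: less_le)
  have "measure M {\<omega>\<in>space M. \<forall>i\<in>S-{a}. Z i \<omega> \<le> Z a \<omega>} \<le> measure M (EM a \<union> (\<Union>i\<in>S-{a}. TM i))"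
    using sub EMs[OF a] TMs fin by (intro finite_measure_mono) auto
  also have "\<dots> \<le> measure M (EM a) + measure M (\<Union>i\<in>S-{a}. TM i)"
    using EMs[OF a] TMs fin by (intro measure_subadditive) auto
  also have "measure M (\<Union>i\<in>S-{a}. TM i) \<le> (\<Sum>i\<in>S-{a}. measure M (TM i))"
    using TMs fin by (intro measure_subadditive_finite) auto
  also have "(\<Sum>i\<in>S-{a}. measure M (TM i)) = 0" using TM0 by simp
  finally show ?thesis using Ea by simp
qed



lemma softmax_pos: "softmax u r t > 0"
  unfolding softmax_def by (intro divide_pos_pos) (auto intro: sum_pos)

lemma softmax_shift:
  fixes u :: "'v::finite \<Rightarrow> 'e::real_inner"
  shows "softmax u (r + s *\<^sub>R w) a =
    softmax u r a / (\<Sum>t\<in>UNIV. softmax u r t * exp (s * (w \<bullet> u t - w \<bullet> u a)))"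
proof -
  define Z where "Z = (\<Sum>s\<in>UNIV. exp (u s \<bullet> r))"
  have Zp: "Z > 0" unfolding Z_def by (auto intro: sum_pos)
  have e: "exp (u t \<bullet> (r + s *\<^sub>R w)) = (Z * exp (s * (w \<bullet> u a))) * (softmax u r t * exp (s * (w \<bullet> u t - w \<bullet> u a)))" for t
    using Zp unfolding softmax_def Z_def[symmetric]
    by (simp add: inner_add_right inner_commute exp_add[symmetric] exp_diff algebra_simps flip: exp_diff)
  have "softmax u (r + s *\<^sub>R w) a = (Z * exp (s * (w \<bullet> u a))) * softmax u r a /
      ((Z * exp (s * (w \<bullet> u a))) * (\<Sum>t\<in>UNIV. softmax u r t * exp (s * (w \<bullet> u t - w \<bullet> u a))))"
    unfolding softmax_def[of u "r + s *\<^sub>R w"] e sum_distrib_left[symmetric] by simp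
  also have "\<dots> = softmax u r a / (\<Sum>t\<in>UNIV. softmax u r t * exp (s * (w \<bullet> u t - w \<bullet> u a)))"
    using Zp by simp
  finally show ?thesis .
qed


lemma det:
  fixes u :: "'v::finite \<Rightarrow> 'e::real_inner" and w r :: 'e and lam re sg eps :: real
  assumes aS: "a \<in> S" and nep: "Iplus u S a w \<noteq> {}" and nem: "Iminus u S a w \<noteq> {}"
    and sg: "sg > 0" and pos: "(1 - eps) * (1 - softmax u r a) > 0" and lam: "lam > 0" and re: "re \<noteq> 0"
  shows "alphaK u r S a eps w > 0 \<and> betaK u r S a sg w > 0 \<and>
     softmax u (r + (lam * \<bar>re\<bar>) *\<^sub>R w) a \<le> softmax u r a /
       (softmax u r a + (1 - softmax u r a) * alphaK u r S a eps w * (1 - eps)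
          * (1 + lam\<^sup>2 * sg\<^sup>2 * (betaK u r S a sg w)\<^sup>2 / 2 * re\<^sup>2))"
proof -
  define P where "P = softmax u r"
  have Pp: "P t > 0" for t unfolding P_def by (rule softmax_pos)
  define \<Delta> where "\<Delta> t = w \<bullet> u t - w \<bullet> u a" for t
  define Ip where "Ip = Iplus u S a w"
  define Im where "Im = Iminus u S a w"
  have Ipd: "t \<in> Ip \<Longrightarrow> \<Delta> t > 0" "a \<notin> Ip" for t unfolding Ip_def Iplus_def \<Delta>_def by auto
  have Imd: "t \<in> Im \<Longrightarrow> \<Delta> t < 0" for t unfolding Im_def Iminus_def \<Delta>_def by auto
  have finI: "finite Ip" "finite Im" by auto
  define mp where "mp = massI P Ip"
  define mm where "mm = massI P Im"
  have mpp: "mp > 0" unfolding mp_def massI_def using nep Pp finI unfolding Ip_def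
    by (intro sum_pos) auto
  have mmp: "mm > 0" unfolding mm_def massI_def using nem Pp finI unfolding Im_def
    by (intro sum_pos) auto
  define m where "m = min mp mm"
  have mpos: "m > 0" using mpp mmp unfolding m_def by simp
  have alpha: "alphaK u r S a eps w = m / ((1 - P a) * (1 - eps))"
    unfolding alphaK_def m_def mp_def mm_def Ip_def Im_def P_def ..
  have den: "(1 - P a) * (1 - eps) > 0" using pos unfolding P_def by (simp add: mult.commute)
  have apos: "alphaK u r S a eps w > 0" using alpha den mpos by simp
  have am: "(1 - P a) * alphaK u r S a eps w * (1 - eps) = m"
  proof -
    have "(1 - P a) * alphaK u r S a eps w * (1 - eps) = ((1 - P a) * (1 - eps)) * (m / ((1 - P a) * (1 - eps)))"
      unfolding alpha by (simp add: algebra_simps)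
    also have "\<dots> = m" using den by (metis less_irrefl times_divide_eq_right nonzero_mult_div_cancel_left)
    finally show ?thesis .
  qed
  define cp where "cp = cI P u a w Ip"
  define cm where "cm = cI P u a w Im"
  have cpd: "cp = (1/mp) * (\<Sum>i\<in>Ip. P i * \<Delta> i)" unfolding cp_def cI_def mp_def \<Delta>_def ..
  have cmd: "cm = (1/mm) * (\<Sum>i\<in>Im. P i * \<Delta> i)" unfolding cm_def cI_def mm_def \<Delta>_def ..
  have "(\<Sum>i\<in>Ip. P i * \<Delta> i) > 0" using nep Pp Ipd finI unfolding Ip_def[symmetric]
    by (intro sum_pos) auto
  then have cpp: "cp > 0" using cpd mpp by simp
  have "(\<Sum>i\<in>Im. P i * (- \<Delta> i)) > 0" using nem Pp Imd finI unfolding Im_def[symmetric]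
    by (intro sum_pos) (auto simp: mult_pos_neg intro!: mult_pos_pos)
  then have "(\<Sum>i\<in>Im. P i * \<Delta> i) < 0" by (simp add: sum_negf)
  then have cmn: "cm < 0" using cmd mmp by (simp add: divide_neg_pos)
  define b where "b = min \<bar>cm\<bar> cp"
  have bpos: "b > 0" "b \<le> cp" using cpp cmn unfolding b_def by auto
  have beta: "betaK u r S a sg w = b / sg"
    unfolding betaK_def b_def cm_def cp_def Ip_def Im_def P_def ..
  have bp: "betaK u r S a sg w > 0" using beta bpos sg by simp
  define s where "s = lam * \<bar>re\<bar>"
  have sp: "s > 0" using lam re unfolding s_def by simp
  have fac: "1 + lam\<^sup>2 * sg\<^sup>2 * (betaK u r S a sg w)\<^sup>2 / 2 * re\<^sup>2 = 1 + (s * b)\<^sup>2 / 2"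
    using sg unfolding beta s_def by (simp add: power_mult_distrib field_simps)
  have shift: "softmax u (r + s *\<^sub>R w) a = P a / (\<Sum>t\<in>UNIV. P t * exp (s * \<Delta> t))"
    unfolding P_def \<Delta>_def by (rule softmax_shift)
  have jen: "exp (\<Sum>i\<in>Ip. (P i / mp) *\<^sub>R (s * \<Delta> i)) \<le> (\<Sum>i\<in>Ip. (P i / mp) * exp (s * \<Delta> i))"
  proof (rule convex_on_sum[OF finI(1) _ exp_convex])
    show "Ip \<noteq> {}" using nep Ip_def by simp
    show "(\<Sum>i\<in>Ip. P i / mp) = 1" using mpp unfolding mp_def massI_def by (simp add: sum_divide_distrib[symmetric])
  qed (use Pp mpp in \<open>auto intro: less_imp_le\<close>)
  have e1: "(\<Sum>i\<in>Ip. (P i / mp) *\<^sub>R (s * \<Delta> i)) = s * cp"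
    unfolding cpd by (simp add: sum_distrib_left sum_divide_distrib algebra_simps)
  have e2: "(\<Sum>i\<in>Ip. (P i / mp) * exp (s * \<Delta> i)) = (\<Sum>i\<in>Ip. P i * exp (s * \<Delta> i)) / mp"
    by (simp add: sum_divide_distrib)
  have "exp (s * cp) \<le> (\<Sum>i\<in>Ip. P i * exp (s * \<Delta> i)) / mp" using jen unfolding e1 e2 .
  then have jen2: "mp * exp (s * cp) \<le> (\<Sum>i\<in>Ip. P i * exp (s * \<Delta> i))"
    using mpp by (simp add: pos_le_divide_eq mult.commute)
  have "1 + (s * b)\<^sup>2 / 2 \<le> 1 + (s * cp)\<^sup>2 / 2"
    using bpos sp by (intro add_left_mono divide_right_mono power_mono mult_left_mono) auto
  also have "\<dots> \<le> exp (s * cp)"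
  proof -
    have "0 < s * cp" using sp cpp by simp
    then show ?thesis using exp_lower_Taylor_quadratic[of "s * cp"] by linarith
  qed
  finally have ex: "1 + (s * b)\<^sup>2 / 2 \<le> exp (s * cp)" .
  have "m * (1 + (s * b)\<^sup>2 / 2) \<le> mp * exp (s * cp)"
    using ex mpos unfolding m_def by (intro mult_mono) auto
  also note jen2
  finally have k1: "m * (1 + (s * b)\<^sup>2 / 2) \<le> (\<Sum>i\<in>Ip. P i * exp (s * \<Delta> i))" .
  have "(\<Sum>t\<in>insert a Ip. P t * exp (s * \<Delta> t)) \<le> (\<Sum>t\<in>UNIV. P t * exp (s * \<Delta> t))"
    using Pp by (intro sum_mono2) (auto intro: less_imp_le)
  moreover have "(\<Sum>t\<in>insert a Ip. P t * exp (s * \<Delta> t)) = P a + (\<Sum>i\<in>Ip. P i * exp (s * \<Delta> i))"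
    using Ipd(2) finI by (simp add: \<Delta>_def)
  ultimately have k2: "P a + m * (1 + (s * b)\<^sup>2 / 2) \<le> (\<Sum>t\<in>UNIV. P t * exp (s * \<Delta> t))"
    using k1 by simp
  have Dp: "P a + m * (1 + (s * b)\<^sup>2 / 2) > 0"
  proof -
    have "1 + (s * b)\<^sup>2 / 2 > 0" by (simp add: add_pos_nonneg)
    then show ?thesis using Pp[of a] mpos by (metis add_pos_pos mult_pos_pos)
  qed
  have "P a / (\<Sum>t\<in>UNIV. P t * exp (s * \<Delta> t)) \<le> P a / (P a + m * (1 + (s * b)\<^sup>2 / 2))"
    using k2 Dp Pp[of a] by (intro divide_left_mono) auto
  then have "softmax u (r + s *\<^sub>R w) a \<le> P a / (P a + (1 - P a) * alphaK u r S a eps w * (1 - eps)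
          * (1 + lam\<^sup>2 * sg\<^sup>2 * (betaK u r S a sg w)\<^sup>2 / 2 * re\<^sup>2))"
    unfolding shift fac am .
  then show ?thesis using apos bp unfolding s_def P_def by simp
qed



lemma (in prob_space) min_prob:
  fixes Z :: "'i \<Rightarrow> 'a \<Rightarrow> real"
  assumes fin: "finite S" and a: "a \<in> S" and ind: "indep_vars (\<lambda>_. borel) Z S"
    and dist: "\<And>i. i \<in> S \<Longrightarrow> distr M borel (Z i) = distr M borel (Z a)"
    and atom: "\<And>x. measure M {\<omega>\<in>space M. Z a \<omega> = x} = 0"
  shows "measure M {\<omega>\<in>space M. \<forall>i\<in>S-{a}. Z a \<omega> \<le> Z i \<omega>} \<le> 1 / card S"
proof -
  have rv: "\<And>i. i \<in> S \<Longrightarrow> random_variable borel (Z i)"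
    using ind by (simp add: indep_vars_def)
  have ind2: "indep_vars (\<lambda>_. borel) (\<lambda>i \<omega>. - Z i \<omega>) S"
    using indep_vars_compose2[OF ind, of "\<lambda>_ x. - x" "\<lambda>_. borel"] by simp
  have dist2: "distr M borel (\<lambda>\<omega>. - Z i \<omega>) = distr M borel (\<lambda>\<omega>. - Z a \<omega>)" if "i \<in> S" for i
  proof -
    have "distr M borel (\<lambda>\<omega>. - Z i \<omega>) = distr (distr M borel (Z i)) borel uminus"
      using rv[OF that] by (subst distr_distr) (auto simp: comp_def)
    also have "\<dots> = distr (distr M borel (Z a)) borel uminus" using dist[OF that] by simp
    also have "\<dots> = distr M borel (\<lambda>\<omega>. - Z a \<omega>)"
      using rv[OF a] by (subst distr_distr) (auto simp: comp_def)
    finally show ?thesis .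
  qed
  have atom2: "measure M {\<omega>\<in>space M. - Z a \<omega> = x} = 0" for x
  proof -
    have "{\<omega>\<in>space M. - Z a \<omega> = x} = {\<omega>\<in>space M. Z a \<omega> = - x}" by auto
    then show ?thesis using atom[of "-x"] by simp
  qed
  have "measure M {\<omega>\<in>space M. \<forall>i\<in>S-{a}. - Z i \<omega> \<le> - Z a \<omega>} \<le> 1 / card S"
    by (rule max_prob[OF fin a ind2 dist2 atom2])
  then show ?thesis by simp
qed

theorem mainTheorem7:
  fixes M :: "'w measure"
    and u :: "'v::finite \<Rightarrow> 'e::euclidean_space"
    and a :: "nat \<Rightarrow> 'v"
    and N T :: nat
    and r :: "nat \<Rightarrow> 'e"
    and re lam :: real
    and S :: "nat \<Rightarrow> 'v set"
    and eps sg :: "nat \<Rightarrow> real"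
    and v :: "nat \<Rightarrow> 'w \<Rightarrow> 'e"
  assumes "prob_space M"
    and "re \<noteq> 0" and "lam > 0" and "T \<ge> 3"
    and "\<forall>k<N. softmax u (r k) (a k) < 1"
    and "\<forall>k<N. a k \<in> S k \<and> card (S k) = T"
    and "\<forall>k<N. 0 \<le> eps k \<and> eps k < 1"
    and "\<forall>k<N. (\<Sum>i\<in>S k - {a k}. softmax u (r k) i)
                 = (1 - eps k) * (1 - softmax u (r k) (a k))"
    and "\<forall>k<N. (1 - eps k) * (1 - softmax u (r k) (a k)) > 0"
    and "\<forall>k<N. v k \<in> borel_measurable M"
    and "\<forall>k<N. \<forall>\<omega>\<in>space M. norm (v k \<omega>) = 1"
    and "\<forall>k<N. prob_space.indep_vars M (\<lambda>_. borel) (\<lambda>i \<omega>. v k \<omega> \<bullet> u i) (S k)"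
    and "\<forall>k<N. \<forall>i\<in>S k. \<forall>j\<in>S k.
           distr M borel (\<lambda>\<omega>. v k \<omega> \<bullet> u i) = distr M borel (\<lambda>\<omega>. v k \<omega> \<bullet> u j)"
    and "\<forall>k<N. \<forall>i\<in>S k. \<forall>x. measure M {\<omega>\<in>space M. v k \<omega> \<bullet> u i = x} = 0"
    and "\<forall>k<N. sg k > 0 \<and>
           (\<forall>i\<in>S k. prob_space.variance M (\<lambda>\<omega>. v k \<omega> \<bullet> u i) = (sg k)\<^sup>2)"
  shows "\<exists>A\<in>sets M. measure M A \<ge> 1 - 2 * real N / real T \<and>
           (\<forall>\<omega>\<in>A.
              (\<forall>k<N. alphaK u (r k) (S k) (a k) (eps k) (v k \<omega>) > 0 \<and>
                     betaK u (r k) (S k) (a k) (sg k) (v k \<omega>) > 0) \<and>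
              (\<Prod>k<N. softmax u (r k + (lam * \<bar>re\<bar>) *\<^sub>R v k \<omega>) (a k))
                \<le> (\<Prod>k<N. softmax u (r k) (a k)) /
                   (\<Prod>k<N. softmax u (r k) (a k)
                      + (1 - softmax u (r k) (a k)) * alphaK u (r k) (S k) (a k) (eps k) (v k \<omega>)
                        * (1 - eps k)
                        * (1 + lam\<^sup>2 * (sg k)\<^sup>2 * (betaK u (r k) (S k) (a k) (sg k) (v k \<omega>))\<^sup>2 / 2
                              * re\<^sup>2)))"
proof -
  interpret prob_space M by fact
  define Z where "Z k i \<omega> = v k \<omega> \<bullet> u i" for k i \<omega>
  define B1 where "B1 k = {\<omega>\<in>space M. \<forall>i\<in>S k-{a k}. Z k i \<omega> \<le> Z k (a k) \<omega>}" for k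
  define B2 where "B2 k = {\<omega>\<in>space M. \<forall>i\<in>S k-{a k}. Z k (a k) \<omega> \<le> Z k i \<omega>}" for k
  have Tpos: "real T > 0" using assms(4) by simp
  have ind: "indep_vars (\<lambda>_. borel) (Z k) (S k)" if "k < N" for k
    using assms(12) that unfolding Z_def by auto
  have rv: "Z k i \<in> borel_measurable M" if "k < N" "i \<in> S k" for k i
    using ind[OF that(1)] that(2) by (simp add: indep_vars_def)
  have dist: "distr M borel (Z k i) = distr M borel (Z k (a k))" if "k < N" "i \<in> S k" for k i
    using assms(13) assms(6) that unfolding Z_def by blast
  have atom: "measure M {\<omega>\<in>space M. Z k (a k) \<omega> = x} = 0" if "k < N" for k x
    using assms(14) assms(6) that unfolding Z_def by blast
  have card: "card (S k) = T" "a k \<in> S k" if "k < N" for k using assms(6) that by auto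
  have mB1: "measure M (B1 k) \<le> 1 / T" if "k < N" for k
    using max_prob[OF _ card(2)[OF that] ind[OF that] dist[OF that] atom[OF that]] card[OF that]
    unfolding B1_def by simp
  have mB2: "measure M (B2 k) \<le> 1 / T" if "k < N" for k
    using min_prob[OF _ card(2)[OF that] ind[OF that] dist[OF that] atom[OF that]] card[OF that]
    unfolding B2_def by simp
  have predZ: "Measurable.pred M (\<lambda>\<omega>. \<forall>i\<in>S k-{a k}. Z k i \<omega> \<le> Z k (a k) \<omega>)"
    "Measurable.pred M (\<lambda>\<omega>. \<forall>i\<in>S k-{a k}. Z k (a k) \<omega> \<le> Z k i \<omega>)" if "k < N" for k
  proof -
    have ra: "Z k (a k) \<in> borel_measurable M" using rv[OF that card(2)[OF that]] .
    show "Measurable.pred M (\<lambda>\<omega>. \<forall>i\<in>S k-{a k}. Z k i \<omega> \<le> Z k (a k) \<omega>)"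
    proof (rule pred_intros_finite)
      fix i assume "i \<in> S k - {a k}"
      then have "Z k i \<in> borel_measurable M" using rv[OF that] by auto
      then show "Measurable.pred M (\<lambda>\<omega>. Z k i \<omega> \<le> Z k (a k) \<omega>)" using ra by measurable
    qed simp
    show "Measurable.pred M (\<lambda>\<omega>. \<forall>i\<in>S k-{a k}. Z k (a k) \<omega> \<le> Z k i \<omega>)"
    proof (rule pred_intros_finite)
      fix i assume "i \<in> S k - {a k}"
      then have "Z k i \<in> borel_measurable M" using rv[OF that] by auto
      then show "Measurable.pred M (\<lambda>\<omega>. Z k (a k) \<omega> \<le> Z k i \<omega>)" using ra by measurable
    qed simp
  qed
  have B1s: "B1 k \<in> events" if "k < N" for k
    unfolding B1_def using predZ(1)[OF that] by (rule predE)
  have B2s: "B2 k \<in> events" if "k < N" for k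
    unfolding B2_def using predZ(2)[OF that] by (rule predE)
  define Bad where "Bad = (\<Union>k\<in>{..<N}. B1 k \<union> B2 k)"
  have Bads: "Bad \<in> events" unfolding Bad_def using B1s B2s by auto
  define A where "A = space M - Bad"
  have As: "A \<in> events" unfolding A_def using Bads by auto
  have "measure M Bad \<le> (\<Sum>k\<in>{..<N}. measure M (B1 k \<union> B2 k))"
    unfolding Bad_def using B1s B2s by (intro measure_subadditive_finite) auto
  also have "\<dots> \<le> (\<Sum>k\<in>{..<N}. 2 / real T)"
  proof (rule sum_mono)
    fix k assume "k \<in> {..<N}"
    then have k: "k < N" by simp
    have "measure M (B1 k \<union> B2 k) \<le> measure M (B1 k) + measure M (B2 k)"
      using B1s[OF k] B2s[OF k] by (intro measure_subadditive) (auto simp: emeasure_eq_measure)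
    also have "\<dots> \<le> 2 / real T" using mB1[OF k] mB2[OF k] by simp
    finally show "measure M (B1 k \<union> B2 k) \<le> 2 / real T" .
  qed
  also have "\<dots> = 2 * real N / real T" by simp
  finally have mBad: "measure M Bad \<le> 2 * real N / real T" .
  have mA: "measure M A \<ge> 1 - 2 * real N / real T"
    using prob_compl[OF Bads] mBad unfolding A_def by simp
  show ?thesis
  proof (intro bexI[of _ A] conjI ballI)
    show "A \<in> sets M" using As .
    show "measure M A \<ge> 1 - 2 * real N / real T" by (rule mA)
    fix \<omega> assume \<omega>A: "\<omega> \<in> A"
    have D: "alphaK u (r k) (S k) (a k) (eps k) (v k \<omega>) > 0 \<and> betaK u (r k) (S k) (a k) (sg k) (v k \<omega>) > 0 \<and>
       softmax u (r k + (lam * \<bar>re\<bar>) *\<^sub>R v k \<omega>) (a k) \<le> softmax u (r k) (a k) /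
       (softmax u (r k) (a k) + (1 - softmax u (r k) (a k)) * alphaK u (r k) (S k) (a k) (eps k) (v k \<omega>) * (1 - eps k)
          * (1 + lam\<^sup>2 * (sg k)\<^sup>2 * (betaK u (r k) (S k) (a k) (sg k) (v k \<omega>))\<^sup>2 / 2 * re\<^sup>2))"
      if k: "k < N" for k
    proof (rule det)
      have \<omega>s: "\<omega> \<in> space M" "\<omega> \<notin> B1 k" "\<omega> \<notin> B2 k" using \<omega>A k unfolding A_def Bad_def by auto
      show "a k \<in> S k" using card(2)[OF k] .
      show "Iplus u (S k) (a k) (v k \<omega>) \<noteq> {}"
      proof -
        obtain i where "i \<in> S k - {a k}" "\<not> Z k i \<omega> \<le> Z k (a k) \<omega>" using \<omega>s unfolding B1_def by auto
        then have "i \<in> Iplus u (S k) (a k) (v k \<omega>)" unfolding Iplus_def Z_def by auto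
        then show ?thesis by auto
      qed
      show "Iminus u (S k) (a k) (v k \<omega>) \<noteq> {}"
      proof -
        obtain i where "i \<in> S k - {a k}" "\<not> Z k (a k) \<omega> \<le> Z k i \<omega>" using \<omega>s unfolding B2_def by auto
        then have "i \<in> Iminus u (S k) (a k) (v k \<omega>)" unfolding Iminus_def Z_def by auto
        then show ?thesis by auto
      qed
      show "sg k > 0" using assms(15) k by auto
      show "(1 - eps k) * (1 - softmax u (r k) (a k)) > 0" using assms(9) k by auto
    qed (use assms(2,3) in auto)
    show "\<forall>k<N. alphaK u (r k) (S k) (a k) (eps k) (v k \<omega>) > 0 \<and>
                     betaK u (r k) (S k) (a k) (sg k) (v k \<omega>) > 0" using D by blast
    have "(\<Prod>k<N. softmax u (r k + (lam * \<bar>re\<bar>) *\<^sub>R v k \<omega>) (a k)) \<le>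
      (\<Prod>k<N. softmax u (r k) (a k) /
       (softmax u (r k) (a k) + (1 - softmax u (r k) (a k)) * alphaK u (r k) (S k) (a k) (eps k) (v k \<omega>) * (1 - eps k)
          * (1 + lam\<^sup>2 * (sg k)\<^sup>2 * (betaK u (r k) (S k) (a k) (sg k) (v k \<omega>))\<^sup>2 / 2 * re\<^sup>2)))"
      using D by (intro prod_mono) (auto intro: less_imp_le softmax_pos)
    then show "(\<Prod>k<N. softmax u (r k + (lam * \<bar>re\<bar>) *\<^sub>R v k \<omega>) (a k))
                \<le> (\<Prod>k<N. softmax u (r k) (a k)) /
                   (\<Prod>k<N. softmax u (r k) (a k)
                      + (1 - softmax u (r k) (a k)) * alphaK u (r k) (S k) (a k) (eps k) (v k \<omega>)
                        * (1 - eps k)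
                        * (1 + lam\<^sup>2 * (sg k)\<^sup>2 * (betaK u (r k) (S k) (a k) (sg k) (v k \<omega>))\<^sup>2 / 2
                              * re\<^sup>2))"
      by (simp add: prod_dividef)
  qed
qed

end
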